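(* Let $(\mathbb{X},d,\mu)$ be a metric measure space satisfying the $\delta$-annular decay property for some $\delta\in(0,1]$ with constant $D_\delta\geq1$. Suppose $\varrho$ is an $L$-Lipschitz admissible radius function in a domain $\Omega\subset\mathbb{X}$ for some $L\geq1$. Then for every compact $K\subset\Omega$ and all $x,y\in K$, $$\frac{\mu(B_x\triangle B_y)}{\max\{\mu(B_x),\mu(B_y)\}}\leq4\,L\,D_\delta\left(\frac{d(x,y)}{\varrho_K}\right)^\delta.$$
   Context: A metric measure space $(\mathbb{X},d,\mu)$ is a metric space with a positive Borel regular measure $\mu$ with $0<\mu(B)<\infty$ for every ball $B$. It satisfies the $\delta$-annular decay property with constant $D_\delta$ if $\mu(B(x,R)\setminus B(x,r))\leq D_\delta\left(\frac{R-r}{R}\right)^\delta\mu(B(x,R))$ for all $x$, $0<r\leq R$. An admissible radius function in $\Omega$ is $\varrho\in C(\overline\Omega)$, $\varrho\ge0$, with $0<\varrho(x)\leq\mathrm{dist}(x,\partial\Omega)$ for $x\in\Omega$ and $\varrho=0$ exactly on $\partial\Omega$; $L$-Lipschitz means $|\varrho(x)-\varrho(y)|\le L\,d(x,y)$ for $x,y\in\Omega$. $\varrho_K=\inf_K\varrho$, $B_x=\overline{B}(x,\varrho(x))$, $A\triangle B=(A\setminus B)\cup(B\setminus A)$. *)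

theory Defs
  imports "HOL-Analysis.Analysis"
begin

definition metric_measure_space :: "('a::metric_space) measure \<Rightarrow> bool" where
  "metric_measure_space \<mu> \<longleftrightarrow> sets \<mu> = sets borel \<and>
     (\<forall>x r. 0 < r \<longrightarrow> 0 < emeasure \<mu> (ball x r) \<and> emeasure \<mu> (ball x r) < \<infinity>)"

definition annular_decay :: "('a::metric_space) measure \<Rightarrow> real \<Rightarrow> real \<Rightarrow> bool" where
  "annular_decay \<mu> \<delta> D \<longleftrightarrow>
     (\<forall>x r R. 0 < r \<and> r \<le> R \<longrightarrow>
        measure \<mu> (ball x R - ball x r) \<le> D * ((R - r) / R) powr \<delta> * measure \<mu> (ball x R))"

definition domain :: "('a::metric_space) set \<Rightarrow> bool" where
  "domain \<Omega> \<longleftrightarrow> open \<Omega> \<and> connected \<Omega> \<and> \<Omega> \<noteq> {}"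

text \<open>Admissible radius function; dist(x, boundary) is encoded as
  \<open>\<forall>z \<in> frontier \<Omega>. \<rho> x \<le> dist x z\<close> (so an empty boundary means distance \<infinity>).\<close>
definition admissible_radius :: "('a::metric_space) set \<Rightarrow> ('a \<Rightarrow> real) \<Rightarrow> bool" where
  "admissible_radius \<Omega> \<rho> \<longleftrightarrow>
     continuous_on (closure \<Omega>) \<rho> \<and>
     (\<forall>x\<in>closure \<Omega>. 0 \<le> \<rho> x) \<and>
     (\<forall>x\<in>\<Omega>. 0 < \<rho> x \<and> (\<forall>z\<in>frontier \<Omega>. \<rho> x \<le> dist x z)) \<and>
     (\<forall>x\<in>closure \<Omega>. \<rho> x = 0 \<longleftrightarrow> x \<in> frontier \<Omega>)"

definition lipschitz_in :: "('a::metric_space) set \<Rightarrow> real \<Rightarrow> ('a \<Rightarrow> real) \<Rightarrow> bool" where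
  "lipschitz_in \<Omega> L \<rho> \<longleftrightarrow> (\<forall>x\<in>\<Omega>. \<forall>y\<in>\<Omega>. \<bar>\<rho> x - \<rho> y\<bar> \<le> L * dist x y)"

definition symdiff :: "'a set \<Rightarrow> 'a set \<Rightarrow> 'a set" where
  "symdiff A B = (A - B) \<union> (B - A)"

end

theory Submission imports Defs begin

lemma mms_sets:
  assumes "metric_measure_space \<mu>"
  shows "sets \<mu> = sets borel"
  using assms unfolding metric_measure_space_def by blast

lemma mms_ball_fm:
  fixes \<mu> :: "'a::metric_space measure"
  assumes "metric_measure_space \<mu>" "0 < r"
  shows "ball x r \<in> fmeasurable \<mu>"
  using assms unfolding metric_measure_space_def fmeasurable_def by auto

lemma mms_cball_fm:
  fixes \<mu> :: "'a::metric_space measure"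
  assumes "metric_measure_space \<mu>"
  shows "cball x r \<in> fmeasurable \<mu>"
proof -
  have s: "sets \<mu> = sets borel" using mms_sets[OF assms] .
  have "cball x r \<subseteq> ball x (\<bar>r\<bar> + 1)" by auto
  hence "emeasure \<mu> (cball x r) \<le> emeasure \<mu> (ball x (\<bar>r\<bar> + 1))"
    by (intro emeasure_mono) (auto simp: s)
  also have "\<dots> < \<infinity>" using assms unfolding metric_measure_space_def by auto
  finally show ?thesis by (auto simp: fmeasurable_def s)
qed

lemma key:
  fixes \<mu> :: "'a::metric_space measure"
  assumes mms: "metric_measure_space \<mu>" and ad: "annular_decay \<mu> \<delta> D" and D: "0 \<le> D" and dl: "0 < \<delta>"
    and d: "0 < dist x y" "dist x y < ry" and rx: "0 < rx"
    and lip: "\<bar>rx - ry\<bar> \<le> L * dist x y" and L: "0 \<le> L"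
  shows "measure \<mu> (cball x rx - cball y ry)
     \<le> D * ((L+1)*dist x y / rx) powr \<delta> * measure \<mu> (cball x rx)"
proof -
  have s: "sets \<mu> = sets borel" using mms_sets[OF mms] .
  define r' where "r' = min (ry - dist x y) rx"
  have r'pos: "0 < r'" using d rx by (simp add: r'_def)
  define R where "R n = rx + inverse (real (Suc n))" for n::nat
  define f where "f n = D * ((inverse (real (Suc n)) + (L+1)*dist x y) / R n) powr \<delta>
      * measure \<mu> (ball x (R n))" for n
  have bound: "measure \<mu> (cball x rx - cball y ry) \<le> f n" for n
  proof -
    have ip: "0 < inverse (real (Suc n))" by simp
    have Rpos: "0 < R n" "r' \<le> R n" using rx ip unfolding R_def r'_def by linarith+
    have sub: "cball x rx - cball y ry \<subseteq> ball x (R n) - ball x r'"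
    proof
      fix z assume z: "z \<in> cball x rx - cball y ry"
      hence "dist x z \<le> rx" "dist y z > ry" by auto
      moreover have "dist y z \<le> dist x y + dist x z"
        by (metis dist_commute dist_triangle)
      ultimately have "dist x z < R n" "\<not> dist x z < r'"
        using ip unfolding R_def r'_def by linarith+
      thus "z \<in> ball x (R n) - ball x r'" by simp
    qed
    have "measure \<mu> (cball x rx - cball y ry) \<le> measure \<mu> (ball x (R n) - ball x r')"
      by (rule measure_mono_fmeasurable[OF sub]) (auto simp: s intro!: fmeasurable.Diff mms_ball_fm[OF mms] Rpos r'pos)
    also have "\<dots> \<le> D * ((R n - r')/R n) powr \<delta> * measure \<mu> (ball x (R n))"
      using ad r'pos Rpos unfolding annular_decay_def by blast
    also have "\<dots> \<le> f n" unfolding f_def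
    proof (intro mult_right_mono mult_left_mono powr_mono2 divide_right_mono)
      show "R n - r' \<le> inverse (real (Suc n)) + (L + 1) * dist x y"
        using lip unfolding R_def r'_def by (auto simp: min_def abs_le_iff algebra_simps)
    qed (use Rpos D dl in auto)
    finally show ?thesis .
  qed
  have ballim: "(\<lambda>n. measure \<mu> (ball x (R n))) \<longlonglongrightarrow> measure \<mu> (\<Inter>n. ball x (R n))"
  proof (rule Lim_measure_decseq)
    show "range (\<lambda>n. ball x (R n)) \<subseteq> sets \<mu>" by (auto simp: s)
    show "decseq (\<lambda>n. ball x (R n))"
      unfolding decseq_Suc_iff
    proof
      fix n
      have "R (Suc n) \<le> R n" unfolding R_def
        by (simp add: le_imp_inverse_le)
      thus "ball x (R (Suc n)) \<subseteq> ball x (R n)" by (rule subset_ball)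
    qed
    show "emeasure \<mu> (ball x (R n)) \<noteq> \<infinity>" for n
      using mms rx unfolding metric_measure_space_def R_def
      by (metis add_pos_pos inverse_positive_iff_positive less_irrefl of_nat_0_less_iff zero_less_Suc)
  qed
  have inter: "(\<Inter>n. ball x (R n)) = cball x rx"
  proof
    show "cball x rx \<subseteq> (\<Inter>n. ball x (R n))"
    proof (intro subsetI InterI, clarsimp)
      fix z n assume "dist x z \<le> rx"
      moreover have "0 < inverse (real (Suc n))" by simp
      ultimately show "dist x z < R n" unfolding R_def by linarith
    qed
    show "(\<Inter>n. ball x (R n)) \<subseteq> cball x rx"
    proof
      fix z assume z: "z \<in> (\<Inter>n. ball x (R n))"
      show "z \<in> cball x rx"
      proof (rule ccontr)
        assume "z \<notin> cball x rx"
        hence "0 < dist x z - rx" by simp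
        then obtain n where "inverse (real (Suc n)) < dist x z - rx"
          using reals_Archimedean by blast
        moreover have "dist x z < R n" using z by auto
        ultimately show False unfolding R_def by linarith
      qed
    qed
  qed
  have Rlim: "R \<longlonglongrightarrow> rx + 0" unfolding R_def
    by (intro tendsto_add tendsto_const LIMSEQ_inverse_real_of_nat)
  have flim: "f \<longlonglongrightarrow> D * ((0 + (L+1)*dist x y) / (rx + 0)) powr \<delta> * measure \<mu> (cball x rx)"
    unfolding f_def
    apply (intro tendsto_mult tendsto_const tendsto_powr tendsto_divide tendsto_add LIMSEQ_inverse_real_of_nat Rlim)
    using rx d L ballim inter by (auto simp: add_pos_pos)
  show ?thesis
    using LIMSEQ_le_const[OF flim] bound by auto
qed

lemma key2:
  fixes \<mu> :: "'a::metric_space measure"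
  assumes mms: "metric_measure_space \<mu>" and ad: "annular_decay \<mu> \<delta> D" and D: "0 \<le> D"
    and dl: "0 < \<delta>" "\<delta> \<le> 1"
    and d: "0 < dist x y" "dist x y < m" and m: "m \<le> rx" "m \<le> ry"
    and lip: "\<bar>rx - ry\<bar> \<le> L * dist x y" and L: "1 \<le> L"
  shows "measure \<mu> (cball x rx - cball y ry)
     \<le> 2 * L * D * (dist x y / m) powr \<delta> * measure \<mu> (cball x rx)"
proof -
  have m0: "0 < m" using d by linarith
  have "measure \<mu> (cball x rx - cball y ry)
     \<le> D * ((L+1)*dist x y / rx) powr \<delta> * measure \<mu> (cball x rx)"
    by (rule key[OF mms ad D dl(1) d(1)]) (use d m lip L in linarith)+
  also have "\<dots> \<le> D * (2 * L * (dist x y / m) powr \<delta>) * measure \<mu> (cball x rx)"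
  proof (intro mult_right_mono mult_left_mono D)
    have "((L+1)*dist x y / rx) powr \<delta> \<le> ((L+1) * (dist x y / m)) powr \<delta>"
    proof (rule powr_mono2)
      show "(L+1)*dist x y / rx \<le> (L+1) * (dist x y / m)"
        proof -
          have "0 < rx * m" using m0 m by (intro mult_pos_pos) auto
          then show ?thesis using divide_left_mono[of m rx "(L+1)*dist x y"] m d L by simp
        qed
    qed (use dl d m0 m L in auto)
    also have "\<dots> = (L+1) powr \<delta> * (dist x y / m) powr \<delta>"
      using L d m0 by (metis powr_mult)
    also have "\<dots> \<le> (2*L) * (dist x y / m) powr \<delta>"
    proof (rule mult_right_mono)
      have "(L+1) powr \<delta> \<le> (L+1) powr 1" using L dl by (intro powr_mono) auto
      thus "(L+1) powr \<delta> \<le> 2*L" using L by simp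
    qed simp
    finally show "((L+1)*dist x y / rx) powr \<delta> \<le> 2 * L * (dist x y / m) powr \<delta>" .
    show "0 \<le> measure \<mu> (cball x rx)" by simp
  qed
  finally show ?thesis by (simp add: algebra_simps)
qed

lemma div_helper:
  fixes S c M :: real
  assumes "S \<le> c * M" "0 \<le> c" "0 \<le> M"
  shows "S / M \<le> c"
  using assms by (cases "M = 0") (auto simp: pos_divide_le_eq)

theorem lemma3p6:
  fixes \<mu> :: "('a::metric_space) measure" and \<delta> D L :: real
    and \<Omega> K :: "'a set" and \<rho> :: "'a \<Rightarrow> real"
  assumes "metric_measure_space \<mu>"
    and "0 < \<delta>" "\<delta> \<le> 1" "1 \<le> D" "annular_decay \<mu> \<delta> D"
    and "domain \<Omega>" "1 \<le> L" "admissible_radius \<Omega> \<rho>" "lipschitz_in \<Omega> L \<rho>"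
    and "compact K" "K \<subseteq> \<Omega>"
    and "x \<in> K" "y \<in> K"
  shows "measure \<mu> (symdiff (cball x (\<rho> x)) (cball y (\<rho> y)))
           / max (measure \<mu> (cball x (\<rho> x))) (measure \<mu> (cball y (\<rho> y)))
         \<le> 4 * L * D * (dist x y / (INF z\<in>K. \<rho> z)) powr \<delta>"
proof -
  note mms = assms(1)
  have s: "sets \<mu> = sets borel" using mms_sets[OF mms] .
  have adm: "admissible_radius \<Omega> \<rho>" by fact
  have Kcl: "K \<subseteq> closure \<Omega>" using assms(11) closure_subset by blast
  have cont: "continuous_on K \<rho>"
    using adm Kcl unfolding admissible_radius_def by (meson continuous_on_subset)
  have pos: "\<And>z. z \<in> K \<Longrightarrow> 0 < \<rho> z" using adm assms(11) unfolding admissible_radius_def by blast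
  obtain z0 where z0: "z0 \<in> K" "\<And>z. z \<in> K \<Longrightarrow> \<rho> z0 \<le> \<rho> z"
    using continuous_attains_inf[OF assms(10) _ cont] assms(12) by blast
  define m where "m = (INF z\<in>K. \<rho> z)"
  have bdd: "bdd_below (\<rho> ` K)" using z0 by (auto simp: bdd_below_def)
  have mle: "\<And>z. z \<in> K \<Longrightarrow> m \<le> \<rho> z" unfolding m_def using bdd by (intro cINF_lower)
  have mge: "\<rho> z0 \<le> m" unfolding m_def using z0 assms(12) by (intro cINF_greatest) auto
  have m0: "0 < m" using pos[OF z0(1)] mge by linarith
  have lip: "\<bar>\<rho> x - \<rho> y\<bar> \<le> L * dist x y"
    using assms(9,11,12,13) unfolding lipschitz_in_def by blast
  have lip': "\<bar>\<rho> y - \<rho> x\<bar> \<le> L * dist y x"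
    using lip by (simp add: abs_minus_commute dist_commute)
  define A where "A = measure \<mu> (cball x (\<rho> x))"
  define B where "B = measure \<mu> (cball y (\<rho> y))"
  define S where "S = measure \<mu> (symdiff (cball x (\<rho> x)) (cball y (\<rho> y)))"
  define S1 where "S1 = measure \<mu> (cball x (\<rho> x) - cball y (\<rho> y))"
  define S2 where "S2 = measure \<mu> (cball y (\<rho> y) - cball x (\<rho> x))"
  have SS: "S \<le> S1 + S2" unfolding S_def S1_def S2_def symdiff_def
    by (rule measure_Un_le) (auto simp: s)
  have S1A: "S1 \<le> A" unfolding S1_def A_def
    by (rule measure_mono_fmeasurable) (auto simp: s intro: mms_cball_fm[OF mms])
  have S2B: "S2 \<le> B" unfolding S2_def B_def
    by (rule measure_mono_fmeasurable) (auto simp: s intro: mms_cball_fm[OF mms])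
  have A0: "0 \<le> A" "0 \<le> B" by (auto simp: A_def B_def)
  define t where "t = (dist x y / m) powr \<delta>"
  have t0: "0 \<le> t" by (simp add: t_def)
  have "S / max A B \<le> 4 * L * D * t"
  proof (cases "dist x y = 0")
    case True
    hence "x = y" by simp
    hence "S = 0" by (simp add: S_def symdiff_def)
    thus ?thesis using t0 assms(4,7) A0 by simp
  next
    case False
    hence d0: "0 < dist x y" by simp
    show ?thesis
    proof (cases "m \<le> dist x y")
      case True
      have "1 \<le> t" unfolding t_def using True m0 assms(2)
        by (intro ge_one_powr_ge_zero) (auto simp: field_simps)
      have "4 \<le> 4 * L * D" using assms(4,7) using mult_mono[of 1 L 1 D] by simp
      also have "\<dots> \<le> 4 * L * D * t" using \<open>1 \<le> t\<close> assms(4,7)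
        using mult_left_mono[of 1 t "4*L*D"] by simp
      finally have c4: "4 \<le> 4 * L * D * t" .
      have "S \<le> 2 * max A B" using SS S1A S2B by linarith
      also have "\<dots> \<le> (4 * L * D * t) * max A B" using c4 A0
        by (intro mult_right_mono) (linarith, simp add: max_def)
      finally show ?thesis by (rule div_helper) (use c4 A0 in linarith)+
    next
      case False
      hence dm: "dist x y < m" by simp
      have "S1 \<le> 2 * L * D * t * A" unfolding S1_def A_def t_def
        by (rule key2[OF mms assms(5)]) (use assms d0 dm mle lip in auto)
      moreover have "S2 \<le> 2 * L * D * (dist y x / m) powr \<delta> * B" unfolding S2_def B_def
        by (rule key2[OF mms assms(5), of y x]) (use assms d0 dm mle lip' in \<open>auto simp: dist_commute\<close>)
      hence "S2 \<le> 2 * L * D * t * B" by (simp add: t_def dist_commute)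
      ultimately have "S \<le> 2 * L * D * t * A + 2 * L * D * t * B" using SS by linarith
      also have "\<dots> \<le> 2 * L * D * t * max A B + 2 * L * D * t * max A B"
        using t0 assms(4,7) by (intro add_mono mult_left_mono) auto
      also have "\<dots> = (4 * L * D * t) * max A B" by (simp add: algebra_simps)
      finally show ?thesis by (rule div_helper) (use t0 assms(4,7) A0 in \<open>auto simp: max_def\<close>)
    qed
  qed
  thus ?thesis unfolding S_def A_def B_def t_def m_def .
qed

end
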